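(* Consider $n$ robots with positions $p_1,\dots,p_n\in\mathbb R^m$ (stacked state $\mathbf x$), communication range $R>0$, leader set $\mathcal L=\{1,\dots,l\}$ and follower set $\mathcal F=\{l+1,\dots,n\}$ with $f=n-l\ge1$. Let $r\in\mathbb Z_+$, $\delta\in\mathbb Z_+$ with $\delta\le f$, and parameters $s,s_A>0$, $q,q_A\in(0,1)$. Let $\bar\pi^r_{\mathcal F}(\delta)$ be computed by the smoothed percolation recursion below. If $\bar\pi^r_{\mathcal F}(\delta)\ge\mathbf 0_f$ componentwise, then the communication graph $\mathcal G(\mathbf x)$ is strongly $r$-robust with respect to $\mathcal L$.
   Context: $\Delta_{ij}(\mathbf x)=\|p_i-p_j\|$. The communication graph $\mathcal G(\mathbf x)=(\mathcal V,\mathcal E)$ has $\mathcal V=[n]$ and undirected edges $\{i,j\}$, $i\ne j$, with $\Delta_{ij}(\mathbf x)<R$; $\mathcal N_i$ is the neighbor set of $i$. A nonempty $\mathcal S\subseteq\mathcal V$ is $r$-reachable if some $i\in\mathcal S$ has $|\mathcal N_i\setminus\mathcal S|\ge r$; $\mathcal G$ is strongly $r$-robust with respect to $\mathcal L$ if every nonempty $\mathcal S_2\subseteq\mathcal V\setminus\mathcal L$ is $r$-reachable. Sigmoid: $\sigma_{s,q}(y)=\frac{1+q}{1+q^{-1}e^{-sy}}-q$, and $\sigma^f_{s,q}$ is its elementwise application on $\mathbb R^f$. Smoothed adjacency $\bar A(\mathbf x)\in\mathbb R^{n\times n}$: for $i\ne j$, $\bar a_{ij}(\mathbf x)=\sigma_{s_A,q_A}\big((R^2-\Delta_{ij}(\mathbf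 x)^2)^3\big)$ if $\Delta_{ij}(\mathbf x)<R$ and $\bar a_{ij}(\mathbf x)=0$ otherwise; $\bar a_{ii}=0$. Smoothed percolation: $\bar\pi^r_{\mathcal F}(0)=\mathbf 0_f$ and, for $k=1,\dots,\delta$, $\bar\pi^r_{\mathcal F}(k)=\sigma^f_{s,q}\Big(\begin{bmatrix}\mathbf 0_{f\times l}&\mathbf I_f\end{bmatrix}\bar A(\mathbf x)\begin{bmatrix}\mathbf 1_l\\ \bar\pi^r_{\mathcal F}(k-1)\end{bmatrix}-r\mathbf 1_f\Big)\in\mathbb R^f$, whose entries are denoted $\bar\pi^r_{l+1}(k),\dots,\bar\pi^r_n(k)$. *)

theory Defs
  imports "HOL-Analysis.Analysis"
begin

text \<open>Robots are indexed by 1..n; positions p i :: real^'m (the dimension m is the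
  type 'm). Leaders are 1..l, followers l+1..n.\<close>

definition Delta :: "(nat \<Rightarrow> real ^ 'm) \<Rightarrow> nat \<Rightarrow> nat \<Rightarrow> real" where
  "Delta p i j = norm (p i - p j)"

definition nbrs :: "nat \<Rightarrow> real \<Rightarrow> (nat \<Rightarrow> real ^ 'm) \<Rightarrow> nat \<Rightarrow> nat set" where
  "nbrs n R p i = {j \<in> {1..n}. j \<noteq> i \<and> Delta p i j < R}"

definition r_reachable :: "nat \<Rightarrow> real \<Rightarrow> (nat \<Rightarrow> real ^ 'm) \<Rightarrow> nat \<Rightarrow> nat set \<Rightarrow> bool" where
  "r_reachable n R p r S \<longleftrightarrow> S \<noteq> {} \<and> (\<exists>i\<in>S. card (nbrs n R p i - S) \<ge> r)"

definition strongly_robust :: "nat \<Rightarrow> real \<Rightarrow> (nat \<Rightarrow> real ^ 'm) \<Rightarrow> nat \<Rightarrow> nat set \<Rightarrow> bool" where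
  "strongly_robust n R p r L \<longleftrightarrow>
     (\<forall>S2. S2 \<subseteq> {1..n} - L \<and> S2 \<noteq> {} \<longrightarrow> r_reachable n R p r S2)"

definition sigmoid :: "real \<Rightarrow> real \<Rightarrow> real \<Rightarrow> real" where
  "sigmoid s q y = (1 + q) / (1 + inverse q * exp (- s * y)) - q"

definition abar :: "real \<Rightarrow> real \<Rightarrow> real \<Rightarrow> (nat \<Rightarrow> real ^ 'm) \<Rightarrow> nat \<Rightarrow> nat \<Rightarrow> real" where
  "abar sA qA R p i j =
     (if i \<noteq> j \<and> Delta p i j < R then sigmoid sA qA ((R^2 - (Delta p i j)^2)^3) else 0)"

text \<open>Smoothed percolation: pibar ... k i is the entry of pi^r_F(k) for follower i
  (i in l+1..n); leaders contribute the constant 1.\<close>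
fun pibar :: "nat \<Rightarrow> nat \<Rightarrow> real \<Rightarrow> real \<Rightarrow> real \<Rightarrow> real \<Rightarrow> real \<Rightarrow> (nat \<Rightarrow> real ^ 'm)
    \<Rightarrow> nat \<Rightarrow> nat \<Rightarrow> nat \<Rightarrow> real" where
  "pibar n l s q sA qA R p r 0 i = 0"
| "pibar n l s q sA qA R p r (Suc k) i =
     sigmoid s q ((\<Sum>j\<in>{1..l}. abar sA qA R p i j)
                  + (\<Sum>j\<in>{l+1..n}. abar sA qA R p i j * pibar n l s q sA qA R p r k j)
                  - real r)"

end

theory Submission
  imports Defs
begin

lemma sig_lt1: "q > 0 \<Longrightarrow> sigmoid s q y < 1"
proof -
  assume q: "q > 0"
  have "1 + inverse q * exp (- s * y) > 1" using q by simp
  hence "(1+q) / (1 + inverse q * exp (- s * y)) < 1 + q"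
    using q by (simp add: divide_less_eq)
  thus ?thesis unfolding sigmoid_def by simp
qed

lemma sig_neg: assumes "s > 0" "q > 0" shows "sigmoid s q y < 0 \<longleftrightarrow> y < 0"
proof -
  have d: "1 + inverse q * exp (- s * y) > 0" using assms by (simp add: add_pos_nonneg)
  have "sigmoid s q y < 0 \<longleftrightarrow> (1+q) < q * (1 + inverse q * exp (- s * y))"
    unfolding sigmoid_def using d by (simp add: divide_less_eq mult.commute)
  also have "\<dots> \<longleftrightarrow> 1 < exp (- s * y)"
  proof -
    have "q * (1 + inverse q * exp (- s * y)) = q + exp (- s * y)" using assms
      by (simp add: distrib_left mult.assoc[symmetric])
    thus ?thesis by simp
  qed
  also have "\<dots> \<longleftrightarrow> 0 < - s * y" by simp
  also have "\<dots> \<longleftrightarrow> y < 0" using assms by (simp add: mult_less_0_iff)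
  finally show ?thesis .
qed

lemma abar_nonneg:
  assumes "sA > 0" "qA > 0" shows "abar sA qA R p i j \<ge> 0"
proof (cases "i \<noteq> j \<and> Delta p i j < R")
  case True
  have "Delta p i j \<ge> 0" unfolding Delta_def by simp
  hence "(Delta p i j)^2 < R^2" using True by (simp add: power_strict_mono)
  hence "(R^2 - (Delta p i j)^2)^3 > 0" by simp
  hence "\<not> sigmoid sA qA ((R^2 - (Delta p i j)^2)^3) < 0" using sig_neg[OF assms] by simp
  thus ?thesis using True unfolding abar_def by simp
qed (auto simp: abar_def)

lemma abar_le1: "qA > 0 \<Longrightarrow> abar sA qA R p i j \<le> 1"
  unfolding abar_def using sig_lt1[of qA] by (auto simp: less_imp_le)

lemma pibar_lt1: "q > 0 \<Longrightarrow> pibar n l s q sA qA R p r k i < 1"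
  by (cases k) (auto simp: sig_lt1)

theorem proposition1:
  fixes p :: "nat \<Rightarrow> real ^ 'm"
    and n l r \<delta> :: nat and R s q sA qA :: real
  assumes "R > 0"
    and "l < n"
    and "r \<ge> 1"
    and "\<delta> \<ge> 1" and "\<delta> \<le> n - l"
    and "s > 0" and "sA > 0"
    and "0 < q" and "q < 1" and "0 < qA" and "qA < 1"
    and "\<forall>i\<in>{l+1..n}. pibar n l s q sA qA R p r \<delta> i \<ge> 0"
  shows "strongly_robust n R p r {1..l}"
proof (rule ccontr)
  assume "\<not> strongly_robust n R p r {1..l}"
  then obtain S where S: "S \<subseteq> {1..n} - {1..l}" "S \<noteq> {}"
    and bad: "\<forall>i\<in>S. card (nbrs n R p i - S) < r"
    unfolding strongly_robust_def r_reachable_def by (auto simp: not_le)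
  let ?a = "abar sA qA R p"
  let ?pi = "pibar n l s q sA qA R p r"
  have key: "\<forall>i\<in>S. ?pi k i \<le> 0 \<and> (k > 0 \<longrightarrow> ?pi k i < 0)" for k
  proof (induction k)
    case 0 then show ?case by simp
  next
    case (Suc k)
    show ?case
    proof
      fix i assume iS: "i \<in> S"
      define N where "N = nbrs n R p i - S"
      define b where "b j = (if j \<in> N then ?a i j else 0)" for j
      have Nsub: "N \<subseteq> {1..n}" unfolding N_def nbrs_def by auto
      have fin: "finite N" using Nsub finite_subset by blast
      have zero: "?a i j = 0" if "j \<in> {1..n}" "j \<notin> nbrs n R p i" for j
        using that unfolding abar_def nbrs_def by auto
      have t1: "?a i j \<le> b j" if "j \<in> {1..l}" for j
      proof -
        have "j \<notin> S" using that S(1) by auto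
        thus ?thesis using that zero[of j] \<open>l<n\<close> unfolding b_def N_def by auto
      qed
      have t2: "?a i j * ?pi k j \<le> b j" if "j \<in> {l+1..n}" for j
      proof (cases "j \<in> S")
        case True
        have "?pi k j \<le> 0" using Suc.IH True by blast
        hence "?a i j * ?pi k j \<le> 0" using abar_nonneg[OF assms(7,10), of R p i j]
          by (simp add: mult_nonneg_nonpos)
        moreover have "b j \<ge> 0" unfolding b_def using abar_nonneg[OF assms(7,10), of R p i j] by simp
        ultimately show ?thesis by linarith
      next
        case False
        have ge: "?a i j \<ge> 0" by (rule abar_nonneg[OF assms(7,10)])
        have "?a i j * ?pi k j \<le> ?a i j * 1"
          using less_imp_le[OF pibar_lt1[OF assms(8), of n l s sA qA R p r k j]] ge by (intro mult_left_mono)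
        moreover have "j \<notin> nbrs n R p i \<Longrightarrow> ?a i j = 0" using zero that by auto
        ultimately show ?thesis using False unfolding b_def N_def by auto
      qed
      have "(\<Sum>j\<in>{1..l}. ?a i j) + (\<Sum>j\<in>{l+1..n}. ?a i j * ?pi k j)
            \<le> (\<Sum>j\<in>{1..l}. b j) + (\<Sum>j\<in>{l+1..n}. b j)"
        using t1 t2 by (intro add_mono sum_mono) auto
      also have "\<dots> = (\<Sum>j\<in>{1..n}. b j)"
      proof -
        have "{1..n} = {1..l} \<union> {l+1..n}" using \<open>l<n\<close> by auto
        thus ?thesis by (simp add: sum.union_disjoint)
      qed
      also have "\<dots> = (\<Sum>j\<in>N. ?a i j)"
        unfolding b_def using Nsub by (simp add: sum.If_cases Int_absorb1)
      also have "\<dots> \<le> (\<Sum>j\<in>N. 1)"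
        by (intro sum_mono abar_le1 assms(10))
      also have "\<dots> = real (card N)" by simp
      also have "\<dots> < real r" using bad iS unfolding N_def by auto
      finally have "(\<Sum>j\<in>{1..l}. ?a i j) + (\<Sum>j\<in>{l+1..n}. ?a i j * ?pi k j) - real r < 0"
        by simp
      hence "?pi (Suc k) i < 0" using sig_neg[OF assms(6,8)] by simp
      thus "?pi (Suc k) i \<le> 0 \<and> (Suc k > 0 \<longrightarrow> ?pi (Suc k) i < 0)" by simp
    qed
  qed
  obtain i where "i \<in> S" using S(2) by blast
  hence "?pi \<delta> i < 0" using key assms(4) by auto
  moreover have "i \<in> {l+1..n}" using \<open>i\<in>S\<close> S(1) by auto
  ultimately show False using assms(12) by force
qed

end
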